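(* Let $h=\sqrt{3}/2$ and consider the similarities of $\mathbb{R}^2$ $$S_1(\vec x)=\tfrac14\vec x,\quad S_2(\vec x)=\tfrac12\vec x+(1,0),\quad S_3(\vec x)=\tfrac14\vec x+(3,0),\quad S_4(\vec x)=\tfrac14\vec x+(1,2h),\quad S_5(\vec x)=\tfrac14\vec x+(\tfrac32,3h).$$ Let $K\subset\mathbb{R}^2$ be the unique nonempty compact set with $K=\bigcup_{j=1}^5 S_j(K)$. Then $K$ is a dendrite (a locally connected continuum containing no simple closed curve). *)

theory Defs
  imports "HOL-Analysis.Analysis"
begin

text \<open>A simple closed curve in S: the image of a closed simple path
  (a loop-free closed path, i.e. a homeomorphic image of the circle) lying in S.\<close>
definition contains_simple_closed_curve :: "(real \<times> real) set \<Rightarrow> bool" where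
  "contains_simple_closed_curve S \<longleftrightarrow>
     (\<exists>g. simple_path g \<and> pathstart g = pathfinish g \<and> path_image g \<subseteq> S)"

definition dendrite :: "(real \<times> real) set \<Rightarrow> bool" where
  "dendrite S \<longleftrightarrow> S \<noteq> {} \<and> compact S \<and> connected S \<and> locally connected S
      \<and> \<not> contains_simple_closed_curve S"

definition hh :: real where "hh = sqrt 3 / 2"

definition S1 :: "real \<times> real \<Rightarrow> real \<times> real" where "S1 x = (1/4) *\<^sub>R x"
definition S2 :: "real \<times> real \<Rightarrow> real \<times> real" where "S2 x = (1/2) *\<^sub>R x + (1, 0)"
definition S3 :: "real \<times> real \<Rightarrow> real \<times> real" where "S3 x = (1/4) *\<^sub>R x + (3, 0)"
definition S4 :: "real \<times> real \<Rightarrow> real \<times> real" where "S4 x = (1/4) *\<^sub>R x + (1, 2 * hh)"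
definition S5 :: "real \<times> real \<Rightarrow> real \<times> real" where "S5 x = (1/4) *\<^sub>R x + (3/2, 3 * hh)"

end

theory Submission
  imports Defs
begin


lemma s_pos: "sqrt 3 > (0::real)" by simp

definition Tri :: "(real \<times> real) set" where
  "Tri = {z. 0 \<le> snd z / sqrt 3 \<and> snd z / sqrt 3 \<le> fst z \<and> snd z / sqrt 3 \<le> 4 - fst z}"

lemma closed_Tri: "closed Tri"
  unfolding Tri_def
  by (intro closed_Collect_conj closed_Collect_le continuous_intros; simp)

lemma S1_aff: "S1 = (\<lambda>x. (1/4) *\<^sub>R x + (0,0))" by (auto simp: S1_def fun_eq_iff zero_prod_def)
lemma S2_aff: "S2 = (\<lambda>x. (1/2) *\<^sub>R x + (1,0))" by (auto simp: S2_def fun_eq_iff)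
lemma S3_aff: "S3 = (\<lambda>x. (1/4) *\<^sub>R x + (3,0))" by (auto simp: S3_def fun_eq_iff)
lemma S4_aff: "S4 = (\<lambda>x. (1/4) *\<^sub>R x + (1,2*hh))" by (auto simp: S4_def fun_eq_iff)
lemma S5_aff: "S5 = (\<lambda>x. (1/4) *\<^sub>R x + (3/2,3*hh))" by (auto simp: S5_def fun_eq_iff)

lemma dist_aff: fixes x y t :: "real \<times> real" shows "dist (c *\<^sub>R x + t) (c *\<^sub>R y + t) = \<bar>c\<bar> * dist x y"
proof -
  have "(c *\<^sub>R x + t) - (c *\<^sub>R y + t) = c *\<^sub>R (x - y)" by (simp add: algebra_simps)
  then show ?thesis by (simp add: dist_norm)
qed

lemma T1: "z \<in> S1 ` Tri \<Longrightarrow> 0 \<le> snd z / sqrt 3 \<and> snd z / sqrt 3 \<le> fst z \<and> snd z / sqrt 3 \<le> 1 - fst z"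
proof -
  assume "z \<in> S1 ` Tri"
  then obtain k where k: "k \<in> Tri" "z = S1 k" by auto
  have e1: "fst z = fst k / 4" "snd z / sqrt 3 = (snd k / sqrt 3) / 4" using k by (auto simp: S1_def)
  show ?thesis using k(1) unfolding Tri_def e1 by auto
qed

lemma T2: "z \<in> S2 ` Tri \<Longrightarrow> 0 \<le> snd z / sqrt 3 \<and> snd z / sqrt 3 \<le> fst z - 1 \<and> snd z / sqrt 3 \<le> 3 - fst z"
proof -
  assume "z \<in> S2 ` Tri"
  then obtain k where k: "k \<in> Tri" "z = S2 k" by auto
  have e1: "fst z = fst k / 2 + 1" "snd z / sqrt 3 = (snd k / sqrt 3) / 2" using k by (auto simp: S2_def)
  show ?thesis using k(1) unfolding Tri_def e1 by auto
qed

lemma T3: "z \<in> S3 ` Tri \<Longrightarrow> 0 \<le> snd z / sqrt 3 \<and> snd z / sqrt 3 \<le> fst z - 3 \<and> snd z / sqrt 3 \<le> 4 - fst z"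
proof -
  assume "z \<in> S3 ` Tri"
  then obtain k where k: "k \<in> Tri" "z = S3 k" by auto
  have e1: "fst z = fst k / 4 + 3" "snd z / sqrt 3 = (snd k / sqrt 3) / 4" using k by (auto simp: S3_def)
  show ?thesis using k(1) unfolding Tri_def e1 by auto
qed

lemma T4: "z \<in> S4 ` Tri \<Longrightarrow> 1 \<le> snd z / sqrt 3 \<and> snd z / sqrt 3 \<le> fst z \<and> snd z / sqrt 3 \<le> 3 - fst z"
proof -
  assume "z \<in> S4 ` Tri"
  then obtain k where k: "k \<in> Tri" "z = S4 k" by auto
  have e1: "fst z = fst k / 4 + 1" "snd z / sqrt 3 = (snd k / sqrt 3) / 4 + 1" using k
    by (auto simp: S4_def hh_def field_simps)
  show ?thesis using k(1) unfolding Tri_def e1 by auto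
qed

lemma T5: "z \<in> S5 ` Tri \<Longrightarrow> 3/2 \<le> snd z / sqrt 3 \<and> snd z / sqrt 3 \<le> fst z \<and> snd z / sqrt 3 \<le> 4 - fst z"
proof -
  assume "z \<in> S5 ` Tri"
  then obtain k where k: "k \<in> Tri" "z = S5 k" by auto
  have e1: "fst z = fst k / 4 + 3/2" "snd z / sqrt 3 = (snd k / sqrt 3) / 4 + 3/2" using k
    by (auto simp: S5_def hh_def field_simps)
  show ?thesis using k(1) unfolding Tri_def e1 by auto
qed

lemma pt_eq: assumes "fst z = a" "snd z / sqrt 3 = b" shows "z = (a, b * sqrt 3)"
proof -
  have "snd z = b * sqrt 3" using assms(2) by (simp add: field_simps)
  then show ?thesis using assms(1) by (cases z) auto
qed

lemma I12: assumes "z \<in> S1 ` Tri" "z \<in> S2 ` Tri" shows "z = (1,0)"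
proof -
  from T1[OF assms(1)] T2[OF assms(2)] have "fst z = 1" "snd z / sqrt 3 = 0" by linarith+
  from pt_eq[OF this] show ?thesis by simp
qed
lemma I23: assumes "z \<in> S2 ` Tri" "z \<in> S3 ` Tri" shows "z = (3,0)"
proof -
  from T2[OF assms(1)] T3[OF assms(2)] have "fst z = 3" "snd z / sqrt 3 = 0" by linarith+
  from pt_eq[OF this] show ?thesis by simp
qed
lemma I24: assumes "z \<in> S2 ` Tri" "z \<in> S4 ` Tri" shows "z = (2,2*hh)"
proof -
  from T2[OF assms(1)] T4[OF assms(2)] have "fst z = 2" "snd z / sqrt 3 = 1" by linarith+
  from pt_eq[OF this] show ?thesis by (simp add: hh_def)
qed
lemma I45: assumes "z \<in> S4 ` Tri" "z \<in> S5 ` Tri" shows "z = (3/2,3*hh)"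
proof -
  from T4[OF assms(1)] T5[OF assms(2)] have "fst z = 3/2" "snd z / sqrt 3 = 3/2" by linarith+
  from pt_eq[OF this] show ?thesis by (simp add: hh_def)
qed
lemma I13: assumes "z \<in> S1 ` Tri" "z \<in> S3 ` Tri" shows False
  using T1[OF assms(1)] T3[OF assms(2)] by linarith
lemma I14: assumes "z \<in> S1 ` Tri" "z \<in> S4 ` Tri" shows False
  using T1[OF assms(1)] T4[OF assms(2)] by linarith
lemma I15: assumes "z \<in> S1 ` Tri" "z \<in> S5 ` Tri" shows False
  using T1[OF assms(1)] T5[OF assms(2)] by linarith
lemma I25: assumes "z \<in> S2 ` Tri" "z \<in> S5 ` Tri" shows False
  using T2[OF assms(1)] T5[OF assms(2)] by linarith
lemma I34: assumes "z \<in> S3 ` Tri" "z \<in> S4 ` Tri" shows False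
  using T3[OF assms(1)] T4[OF assms(2)] by linarith
lemma I35: assumes "z \<in> S3 ` Tri" "z \<in> S5 ` Tri" shows False
  using T3[OF assms(1)] T5[OF assms(2)] by linarith

lemma Tri_inv: "S1 ` Tri \<subseteq> Tri" "S2 ` Tri \<subseteq> Tri" "S3 ` Tri \<subseteq> Tri" "S4 ` Tri \<subseteq> Tri" "S5 ` Tri \<subseteq> Tri"
proof -
  show "S1 ` Tri \<subseteq> Tri" proof fix z assume "z \<in> S1 ` Tri" from T1[OF this] show "z \<in> Tri" unfolding Tri_def mem_Collect_eq by (intro conjI; linarith) qed
  show "S2 ` Tri \<subseteq> Tri" proof fix z assume "z \<in> S2 ` Tri" from T2[OF this] show "z \<in> Tri" unfolding Tri_def mem_Collect_eq by (intro conjI; linarith) qed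
  show "S3 ` Tri \<subseteq> Tri" proof fix z assume "z \<in> S3 ` Tri" from T3[OF this] show "z \<in> Tri" unfolding Tri_def mem_Collect_eq by (intro conjI; linarith) qed
  show "S4 ` Tri \<subseteq> Tri" proof fix z assume "z \<in> S4 ` Tri" from T4[OF this] show "z \<in> Tri" unfolding Tri_def mem_Collect_eq by (intro conjI; linarith) qed
  show "S5 ` Tri \<subseteq> Tri" proof fix z assume "z \<in> S5 ` Tri" from T5[OF this] show "z \<in> Tri" unfolding Tri_def mem_Collect_eq by (intro conjI; linarith) qed
qed

lemma Tri_norm: "z \<in> Tri \<Longrightarrow> norm z \<le> 8"
proof -
  assume z: "z \<in> Tri"
  have s2: "sqrt 3 \<le> (2::real)" by (rule real_le_lsqrt) auto
  define v where "v = snd z / sqrt 3"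
  have sv: "snd z = v * sqrt 3" unfolding v_def by simp
  have v: "0 \<le> v" "v \<le> 2" "0 \<le> fst z" "fst z \<le> 4" using z unfolding Tri_def v_def by auto
  have "v * sqrt 3 \<le> 2 * 2" by (intro mult_mono) (use v s2 in auto)
  moreover have "0 \<le> v * sqrt 3" using v by simp
  ultimately have y: "0 \<le> snd z" "snd z \<le> 4" using sv by linarith+
  have n: "norm z \<le> norm (fst z) + norm (snd z)" using norm_Pair_le[of "fst z" "snd z"] by (metis prod.collapse)
  have "norm (fst z) = fst z" "norm (snd z) = snd z" using v y by auto
  then show ?thesis using n v y by linarith
qed



definition SS :: "((real \<times> real) \<Rightarrow> (real \<times> real)) set" where "SS = {S1,S2,S3,S4,S5}"

lemma dS: "dist (S1 x) (S1 y) = 1/4 * dist x y" "dist (S2 x) (S2 y) = 1/2 * dist x y"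
  "dist (S3 x) (S3 y) = 1/4 * dist x y" "dist (S4 x) (S4 y) = 1/4 * dist x y"
  "dist (S5 x) (S5 y) = 1/4 * dist x y"
  unfolding S1_aff S2_aff S3_aff S4_aff S5_aff by (subst dist_aff; simp)+

lemma SS_lip: "f \<in> SS \<Longrightarrow> dist (f x) (f y) \<le> 1/2 * dist x y"
  using zero_le_dist[of x y] unfolding SS_def by (auto simp: dS)

lemma contS: "continuous_on X S1" "continuous_on X S2" "continuous_on X S3" "continuous_on X S4" "continuous_on X S5"
  unfolding S1_def S2_def S3_def S4_def S5_def by (intro continuous_intros)+

lemma SS_cont: "f \<in> SS \<Longrightarrow> continuous_on X f"
  unfolding SS_def using contS by auto

lemma SS_Tri: "f \<in> SS \<Longrightarrow> f ` Tri \<subseteq> Tri"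
  unfolding SS_def using Tri_inv by auto

lemma Tri_ne: "Tri \<noteq> {}"
proof -
  have "(0,0) \<in> Tri" unfolding Tri_def by simp
  then show ?thesis by auto
qed

lemma infdist_contr:
  fixes X :: "(real \<times> real) set"
  assumes "closed X" "X \<noteq> {}" "f ` X \<subseteq> X" "\<And>x y. dist (f x) (f y) \<le> r * dist x y"
  shows "infdist (f z) X \<le> r * infdist z X"
proof -
  obtain x where x: "x \<in> X" "infdist z X = dist z x" using infdist_attains_inf[OF assms(1,2)] by blast
  have "infdist (f z) X \<le> dist (f z) (f x)" using x assms(3) by (intro infdist_le) auto
  also have "\<dots> \<le> r * dist z x" by (rule assms(4))
  finally show ?thesis using x by simp
qed

definition A0 :: "real \<times> real" where "A0 = (0,0)"
definition B0 :: "real \<times> real" where "B0 = (4,0)"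
definition C0 :: "real \<times> real" where "C0 = (2,4*hh)"

lemma fixes_ABC: "S1 A0 = A0" "S3 B0 = B0" "S5 C0 = C0"
  by (simp_all add: S1_def S3_def S5_def A0_def B0_def C0_def)

lemma junctions: "S1 B0 = (1,0)" "S2 A0 = (1,0)" "S2 B0 = (3,0)" "S3 A0 = (3,0)"
  "S2 C0 = (2,2*hh)" "S4 B0 = (2,2*hh)" "S4 C0 = (3/2,3*hh)" "S5 A0 = (3/2,3*hh)"
  by (simp_all add: S1_def S2_def S3_def S4_def S5_def A0_def B0_def C0_def)

lemma convex_Tri: "convex Tri"
proof (rule convexI)
  fix x y :: "real \<times> real" and u v :: real
  assume x: "x \<in> Tri" and y: "y \<in> Tri" and u: "0 \<le> u" and v: "0 \<le> v" and uv: "u + v = 1"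
  define a where "a = snd x / sqrt 3"
  define b where "b = snd y / sqrt 3"
  have e: "fst (u *\<^sub>R x + v *\<^sub>R y) = u * fst x + v * fst y"
       "snd (u *\<^sub>R x + v *\<^sub>R y) / sqrt 3 = u * a + v * b"
    unfolding a_def b_def by (simp_all add: add_divide_distrib)
  have xa: "0 \<le> a" "a \<le> fst x" "a \<le> 4 - fst x" using x unfolding Tri_def a_def by auto
  have yb: "0 \<le> b" "b \<le> fst y" "b \<le> 4 - fst y" using y unfolding Tri_def b_def by auto
  have m: "0 \<le> u * a" "0 \<le> v * b" "u * a \<le> u * fst x" "v * b \<le> v * fst y"
     "u * a \<le> u * (4 - fst x)" "v * b \<le> v * (4 - fst y)"
    using xa yb u v by (simp_all add: mult_left_mono)
  have "u * (4 - fst x) + v * (4 - fst y) = 4 - (u * fst x + v * fst y)"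
    using uv by (simp add: algebra_simps)
  then show "u *\<^sub>R x + v *\<^sub>R y \<in> Tri"
    unfolding Tri_def mem_Collect_eq e using m by (intro conjI; linarith)
qed

locale attr =
  fixes K :: "(real \<times> real) set"
  assumes cK: "compact K" and neK: "K \<noteq> {}"
    and eqK: "K = S1 ` K \<union> S2 ` K \<union> S3 ` K \<union> S4 ` K \<union> S5 ` K"
begin

lemma clK: "closed K" using cK by (rule compact_imp_closed)

lemma K_cases: "z \<in> K \<Longrightarrow> \<exists>f\<in>SS. \<exists>k\<in>K. z = f k"
  using eqK unfolding SS_def by blast

lemma SS_K: "f \<in> SS \<Longrightarrow> f ` K \<subseteq> K"
  using eqK unfolding SS_def by blast

lemma K_Tri: "K \<subseteq> Tri"
proof -
  have cont: "continuous_on K (\<lambda>z. infdist z Tri)" by (intro continuous_intros)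
  obtain z0 where z0: "z0 \<in> K" "\<forall>y\<in>K. infdist y Tri \<le> infdist z0 Tri"
    using continuous_attains_sup[OF cK neK cont] by blast
  from K_cases[OF z0(1)] obtain f k where fk: "f \<in> SS" "k \<in> K" "z0 = f k" by blast
  have "infdist z0 Tri \<le> 1/2 * infdist k Tri"
    unfolding fk(3) by (rule infdist_contr[OF closed_Tri Tri_ne SS_Tri[OF fk(1)] SS_lip[OF fk(1)]])
  also have "\<dots> \<le> 1/2 * infdist z0 Tri" using z0(2) fk(2) by simp
  finally have z0le: "infdist z0 Tri \<le> 0" by simp
  show ?thesis
  proof
    fix y assume "y \<in> K"
    then have "infdist y Tri \<le> 0" using z0 z0le by force
    then have "infdist y Tri = 0" using infdist_nonneg[of y Tri] by linarith
    then show "y \<in> Tri" using in_closed_iff_infdist_zero[OF closed_Tri Tri_ne] by simp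
  qed
qed

lemma fix_in:
  assumes "f \<in> SS" "f p = p" shows "p \<in> K"
proof -
  have "infdist p K \<le> 1/2 * infdist p K"
    using infdist_contr[OF clK neK SS_K[OF assms(1)] SS_lip[OF assms(1)], of p] assms(2) by simp
  then have "infdist p K = 0" using infdist_nonneg[of p K] by linarith
  then show ?thesis using in_closed_iff_infdist_zero[OF clK neK] by simp
qed

lemma ABC_K: "A0 \<in> K" "B0 \<in> K" "C0 \<in> K"
proof -
  have "S1 \<in> SS" "S3 \<in> SS" "S5 \<in> SS" unfolding SS_def by simp_all
  then show "A0 \<in> K" "B0 \<in> K" "C0 \<in> K" using fix_in fixes_ABC by blast+
qed

lemma KT: "S1 ` K \<subseteq> S1 ` Tri" "S2 ` K \<subseteq> S2 ` Tri" "S3 ` K \<subseteq> S3 ` Tri" "S4 ` K \<subseteq> S4 ` Tri"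
  "S5 ` K \<subseteq> S5 ` Tri" using K_Tri by auto

lemma KI: "S1 ` K \<inter> S2 ` K \<subseteq> {(1,0)}" "S2 ` K \<inter> S3 ` K \<subseteq> {(3,0)}"
  "S2 ` K \<inter> S4 ` K \<subseteq> {(2,2*hh)}" "S4 ` K \<inter> S5 ` K \<subseteq> {(3/2,3*hh)}"
  "S1 ` K \<inter> S3 ` K = {}" "S1 ` K \<inter> S4 ` K = {}" "S1 ` K \<inter> S5 ` K = {}"
  "S2 ` K \<inter> S5 ` K = {}" "S3 ` K \<inter> S4 ` K = {}" "S3 ` K \<inter> S5 ` K = {}"
proof -
  show "S1 ` K \<inter> S2 ` K \<subseteq> {(1,0)}" using KT(1,2) I12 by blast
  show "S2 ` K \<inter> S3 ` K \<subseteq> {(3,0)}" using KT(2,3) I23 by blast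
  show "S2 ` K \<inter> S4 ` K \<subseteq> {(2,2*hh)}" using KT(2,4) I24 by blast
  show "S4 ` K \<inter> S5 ` K \<subseteq> {(3/2,3*hh)}" using KT(4,5) I45 by blast
  show "S1 ` K \<inter> S3 ` K = {}" using KT(1,3) I13 by blast
  show "S1 ` K \<inter> S4 ` K = {}" using KT(1,4) I14 by blast
  show "S1 ` K \<inter> S5 ` K = {}" using KT(1,5) I15 by blast
  show "S2 ` K \<inter> S5 ` K = {}" using KT(2,5) I25 by blast
  show "S3 ` K \<inter> S4 ` K = {}" using KT(3,4) I34 by blast
  show "S3 ` K \<inter> S5 ` K = {}" using KT(3,5) I35 by blast
qed

lemma KJ: "(1,0) \<in> S1 ` K" "(1,0) \<in> S2 ` K" "(3,0) \<in> S2 ` K" "(3,0) \<in> S3 ` K"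
  "(2,2*hh) \<in> S2 ` K" "(2,2*hh) \<in> S4 ` K" "(3/2,3*hh) \<in> S4 ` K" "(3/2,3*hh) \<in> S5 ` K"
  using imageI[OF ABC_K(2), of S1] imageI[OF ABC_K(1), of S2] imageI[OF ABC_K(2), of S2]
    imageI[OF ABC_K(1), of S3] imageI[OF ABC_K(3), of S2] imageI[OF ABC_K(2), of S4]
    imageI[OF ABC_K(3), of S4] imageI[OF ABC_K(1), of S5]
  unfolding junctions by simp_all

end


definition Fm :: "(real \<times> real) set \<Rightarrow> (real \<times> real) set" where
  "Fm X = S1 ` X \<union> S2 ` X \<union> S3 ` X \<union> S4 ` X \<union> S5 ` X"

lemma Fm_mono: "X \<subseteq> Y \<Longrightarrow> Fm X \<subseteq> Fm Y"
  unfolding Fm_def by (intro Un_mono image_mono)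

lemma Fm_cases: "z \<in> Fm X \<Longrightarrow> \<exists>f\<in>SS. \<exists>k\<in>X. z = f k"
  unfolding Fm_def SS_def by blast

lemma compact_Fm: "compact X \<Longrightarrow> compact (Fm X)"
  unfolding Fm_def by (intro compact_Un compact_continuous_image contS)

lemma connected_Fm:
  assumes X: "connected X" "A0 \<in> X" "B0 \<in> X" "C0 \<in> X"
  shows "connected (Fm X)"
proof -
  have c: "connected (S1 ` X)" "connected (S2 ` X)" "connected (S3 ` X)" "connected (S4 ` X)"
    "connected (S5 ` X)" using X(1) by (intro connected_continuous_image contS; simp)+
  have i: "S1 B0 \<in> S1 ` X" "S2 A0 \<in> S2 ` X" "S2 B0 \<in> S2 ` X" "S3 A0 \<in> S3 ` X"
    "S2 C0 \<in> S2 ` X" "S4 B0 \<in> S4 ` X" "S4 C0 \<in> S4 ` X" "S5 A0 \<in> S5 ` X"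
    using X by simp_all
  have j: "S1 B0 = S2 A0" "S2 B0 = S3 A0" "S2 C0 = S4 B0" "S4 C0 = S5 A0"
    using junctions by simp_all
  have c12: "connected (S1 ` X \<union> S2 ` X)"
    by (rule connected_Un[OF c(1) c(2)]) (use i j in auto)
  have c123: "connected (S1 ` X \<union> S2 ` X \<union> S3 ` X)"
    by (rule connected_Un[OF c12 c(3)]) (use i j in auto)
  have c1234: "connected (S1 ` X \<union> S2 ` X \<union> S3 ` X \<union> S4 ` X)"
    by (rule connected_Un[OF c123 c(4)]) (use i j in auto)
  have "connected (S1 ` X \<union> S2 ` X \<union> S3 ` X \<union> S4 ` X \<union> S5 ` X)"
    by (rule connected_Un[OF c1234 c(5)]) (use i j in auto)
  then show ?thesis unfolding Fm_def .
qed

definition Fn :: "nat \<Rightarrow> (real \<times> real) set" where "Fn n = (Fm ^^ n) Tri"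

lemma Fn_0: "Fn 0 = Tri" and Fn_Suc: "Fn (Suc n) = Fm (Fn n)"
  unfolding Fn_def by simp_all

lemma Fm_Tri: "Fm Tri \<subseteq> Tri"
  unfolding Fm_def using Tri_inv by blast

lemma Fn_dec: "Fn (Suc n) \<subseteq> Fn n"
proof (induction n)
  case 0 then show ?case unfolding Fn_Suc Fn_0 by (rule Fm_Tri)
next
  case (Suc n) then show ?case unfolding Fn_Suc[of "Suc n"] by (subst Fn_Suc) (rule Fm_mono)
qed

lemma compact_Fn: "compact (Fn n)"
proof (induction n)
  case 0
  have "bounded Tri" unfolding bounded_iff using Tri_norm by blast
  then show ?case unfolding Fn_0 compact_eq_bounded_closed using closed_Tri by simp
next
  case (Suc n) then show ?case unfolding Fn_Suc by (rule compact_Fm)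
qed

context attr begin

lemma Fm_K: "Fm K = K" unfolding Fm_def using eqK by simp

lemma K_Fn: "K \<subseteq> Fn n"
proof (induction n)
  case 0 then show ?case using K_Tri Fn_0 by simp
next
  case (Suc n) then show ?case unfolding Fn_Suc using Fm_mono[OF Suc] Fm_K by simp
qed

lemma connected_Fn: "connected (Fn n)"
proof (induction n)
  case 0 then show ?case unfolding Fn_0 by (rule convex_connected[OF convex_Tri])
next
  case (Suc n) then show ?case unfolding Fn_Suc
    using connected_Fm K_Fn[of n] ABC_K by blast
qed

lemma Fn_infdist: "z \<in> Fn n \<Longrightarrow> infdist z K \<le> (1/2)^n * 8"
proof (induction n arbitrary: z)
  case 0
  have "infdist z K \<le> dist z A0" by (rule infdist_le[OF ABC_K(1)])
  also have "\<dots> = norm z" by (simp add: A0_def dist_norm zero_prod_def[symmetric])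
  also have "\<dots> \<le> 8" using 0 Tri_norm unfolding Fn_0 by blast
  finally show ?case by simp
next
  case (Suc n)
  from Fm_cases[OF Suc.prems[unfolded Fn_Suc]] obtain f k where fk: "f \<in> SS" "k \<in> Fn n" "z = f k"
    by blast
  have "infdist z K \<le> 1/2 * infdist k K"
    unfolding fk(3) by (rule infdist_contr[OF clK neK SS_K[OF fk(1)] SS_lip[OF fk(1)]])
  also have "\<dots> \<le> 1/2 * ((1/2)^n * 8)" using Suc.IH[OF fk(2)] by simp
  finally show ?case by simp
qed

lemma K_eq_Inter: "K = \<Inter> (range Fn)"
proof
  show "K \<subseteq> \<Inter> (range Fn)" using K_Fn by blast
  show "\<Inter> (range Fn) \<subseteq> K"
  proof
    fix x assume x: "x \<in> \<Inter> (range Fn)"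
    have "infdist x K = 0"
    proof (rule ccontr)
      assume "infdist x K \<noteq> 0"
      then have pos: "infdist x K / 8 > 0" using infdist_nonneg[of x K] by simp
      have "\<exists>n. (1/2::real)^n < infdist x K / 8" by (rule real_arch_pow_inv[OF pos]) simp
      then obtain n where n: "(1/2::real)^n < infdist x K / 8" by blast
      have "infdist x K \<le> (1/2)^n * 8" using Fn_infdist[of x n] x by blast
      then show False using n by simp
    qed
    then show "x \<in> K" using in_closed_iff_infdist_zero[OF clK neK] by simp
  qed
qed

lemma connected_K: "connected K"
proof -
  have "connected (\<Inter> (range Fn))"
  proof (rule connected_nest)
    show "\<And>n. compact (Fn n)" by (rule compact_Fn)
    show "\<And>n. connected (Fn n)" by (rule connected_Fn)
    show "\<And>m n. m \<le> n \<Longrightarrow> Fn n \<subseteq> Fn m"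
      by (rule lift_Suc_antimono_le[of Fn]) (use Fn_dec in auto)
  qed
  then show ?thesis using K_eq_Inter by simp
qed

end


primrec Pcs :: "(real \<times> real) set \<Rightarrow> nat \<Rightarrow> (real \<times> real) set set" where
  "Pcs K 0 = {K}"
| "Pcs K (Suc n) = (\<Union>f\<in>SS. (\<lambda>Q. f ` Q) ` Pcs K n)"

lemma finite_SS: "finite SS" unfolding SS_def by simp

lemma finite_Pcs: "finite (Pcs K n)"
  by (induction n) (auto intro!: finite_UN_I finite_SS)

context attr begin

lemma bK: "bounded K" using cK by (rule compact_imp_bounded)

lemma SS_union: "(\<Union>f\<in>SS. f ` K) = K"
  using eqK unfolding SS_def by auto

lemma Union_Pcs: "\<Union> (Pcs K n) = K"
proof (induction n)
  case 0 then show ?case by simp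
next
  case (Suc n)
  have "\<Union> (Pcs K (Suc n)) = (\<Union>f\<in>SS. f ` \<Union> (Pcs K n))" by auto
  also have "\<dots> = K" unfolding Suc.IH by (rule SS_union)
  finally show ?case .
qed

lemma Pcs_props:
  "Q \<in> Pcs K n \<Longrightarrow> Q \<subseteq> K \<and> compact Q \<and> connected Q \<and>
     (\<forall>a\<in>Q. \<forall>b\<in>Q. dist a b \<le> (1/2)^n * diameter K)"
proof (induction n arbitrary: Q)
  case 0
  then have Q: "Q = K" by simp
  show ?case unfolding Q using cK connected_K diameter_bounded_bound[OF bK] by auto
next
  case (Suc n)
  then obtain f Q0 where f: "f \<in> SS" "Q0 \<in> Pcs K n" "Q = f ` Q0" by auto
  note IH = Suc.IH[OF f(2)]
  have "Q \<subseteq> K" using IH SS_K[OF f(1)] f(3) by blast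
  moreover have "compact Q" unfolding f(3) using IH by (intro compact_continuous_image SS_cont[OF f(1)]) auto
  moreover have "connected Q" unfolding f(3) using IH by (intro connected_continuous_image SS_cont[OF f(1)]) auto
  moreover have "\<forall>a\<in>Q. \<forall>b\<in>Q. dist a b \<le> (1/2)^(Suc n) * diameter K"
  proof (intro ballI)
    fix a b assume "a \<in> Q" "b \<in> Q"
    then obtain a' b' where ab: "a' \<in> Q0" "b' \<in> Q0" "a = f a'" "b = f b'" using f(3) by auto
    have "dist a b \<le> 1/2 * dist a' b'" unfolding ab(3,4) by (rule SS_lip[OF f(1)])
    also have "\<dots> \<le> 1/2 * ((1/2)^n * diameter K)" using IH ab(1,2) by simp
    finally show "dist a b \<le> (1/2)^(Suc n) * diameter K" by simp
  qed
  ultimately show ?case by blast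
qed

lemma lc_aux:
  assumes V: "openin (top_of_set K) V" and x: "x \<in> V"
  shows "\<exists>u. openin (top_of_set K) u \<and> x \<in> u \<and> u \<subseteq> V \<and>
           (\<forall>y. y \<in> u \<longrightarrow> (\<exists>c. connected c \<and> c \<subseteq> V \<and> x \<in> c \<and> y \<in> c))"
proof -
  have VK: "V \<subseteq> K" using V by (simp add: openin_euclidean_subtopology_iff)
  obtain e where e: "e > 0" "\<forall>y\<in>K. dist y x < e \<longrightarrow> y \<in> V"
    using V x unfolding openin_euclidean_subtopology_iff by blast
  have xK: "x \<in> K" using x VK by blast
  define D where "D = diameter K"
  have D0: "0 \<le> D" unfolding D_def by (rule diameter_ge_0[OF bK])
  have "\<exists>n. (1/2::real)^n < e / (D + 1)" by (rule real_arch_pow_inv) (use e D0 in simp_all)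
  then obtain n where n: "(1/2::real)^n < e / (D + 1)" by blast
  have "(1/2::real)^n * (D + 1) < e" using n D0 by (simp add: less_divide_eq)
  moreover have "(1/2::real)^n * D \<le> (1/2)^n * (D + 1)" by (simp add: mult_left_mono)
  ultimately have nD: "(1/2::real)^n * D < e" by linarith
  define P where "P = Pcs K n"
  have PK: "\<Union> P = K" unfolding P_def by (rule Union_Pcs)
  have Pp: "\<And>Q. Q \<in> P \<Longrightarrow> Q \<subseteq> K \<and> compact Q \<and> connected Q \<and> (\<forall>a\<in>Q. \<forall>b\<in>Q. dist a b \<le> (1/2)^n * D)"
    unfolding P_def D_def by (rule Pcs_props)
  define R where "R = \<Union> {Q\<in>P. x \<notin> Q}"
  have "closed R" unfolding R_def
    using finite_Pcs[of K n] Pp by (intro closed_Union) (auto simp: P_def compact_imp_closed)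
  define us where "us = K - R"
  have near: "y \<in> V" if "y \<in> Q" "Q \<in> P" "x \<in> Q" for y Q
  proof -
    have "dist y x \<le> (1/2)^n * D" using Pp[OF that(2)] that(1,3) by blast
    then have "dist y x < e" using nD by linarith
    moreover have "y \<in> K" using Pp[OF that(2)] that(1) by blast
    ultimately show ?thesis using e by blast
  qed
  define cs where "cs = \<Union> {Q\<in>P. x \<in> Q}"
  have cc: "connected cs" unfolding cs_def by (rule connected_Union) (use Pp in auto)
  have cV: "cs \<subseteq> V" unfolding cs_def using near by blast
  have xc: "x \<in> cs" unfolding cs_def using xK PK by blast
  show ?thesis
  proof (rule exI[of _ us], intro conjI allI impI)
    show "openin (top_of_set K) us" unfolding us_def openin_open
      by (rule exI[of _ "- R"]) (use \<open>closed R\<close> in auto)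
    show "x \<in> us" unfolding us_def R_def using xK by blast
    show "us \<subseteq> V"
    proof
      fix y assume "y \<in> us"
      then have "y \<in> K" "y \<notin> R" unfolding us_def by auto
      then obtain Q where "Q \<in> P" "y \<in> Q" using PK by blast
      then have "x \<in> Q" using \<open>y \<notin> R\<close> unfolding R_def by blast
      then show "y \<in> V" using near \<open>Q \<in> P\<close> \<open>y \<in> Q\<close> by blast
    qed
    fix y assume "y \<in> us"
    then have "y \<in> K" "y \<notin> R" unfolding us_def by auto
    then obtain Q where "Q \<in> P" "y \<in> Q" using PK by blast
    then have "x \<in> Q" using \<open>y \<notin> R\<close> unfolding R_def by blast
    then have "y \<in> cs" unfolding cs_def using \<open>Q \<in> P\<close> \<open>y \<in> Q\<close> by blast
    then show "\<exists>c. connected c \<and> c \<subseteq> V \<and> x \<in> c \<and> y \<in> c" using cc cV xc by blast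
  qed
qed

lemma locally_connected_K: "locally connected K"
  unfolding locally_connected_im_kleinen using lc_aux by blast

end


lemma circle_side:
  fixes g :: "real \<Rightarrow> real \<times> real"
  assumes g: "simple_path g" "pathfinish g = pathstart g" and sub: "path_image g \<subseteq> L \<union> R"
    and cl: "closed L" "closed R" and LR: "L \<inter> R \<subseteq> {p}"
  shows "path_image g \<subseteq> L \<or> path_image g \<subseteq> R"
proof (rule ccontr)
  assume "\<not> (path_image g \<subseteq> L \<or> path_image g \<subseteq> R)"
  then obtain a b where a: "a \<in> path_image g" "a \<notin> R" and b: "b \<in> path_image g" "b \<notin> L"
    by blast
  have aL: "a \<in> L" using a sub by blast
  have bR: "b \<in> R" using b sub by blast
  have ab: "a \<noteq> b" using aL b by auto
  obtain u d where ud: "arc u" "arc d" "pathstart u = a" "pathfinish u = b"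
                    "pathstart d = b" "pathfinish d = a"
                    "path_image u \<inter> path_image d = {a,b}"
                    "path_image u \<union> path_image d = path_image g"
    using exists_double_arc[OF g(1) g(2) a(1) b(1) ab] by blast
  have through: "p \<in> path_image h \<and> p \<in> L \<inter> R"
    if h: "path h" "path_image h \<subseteq> path_image g" "a \<in> path_image h" "b \<in> path_image h" for h
  proof -
    have conn: "connected (path_image h)" using h(1) by (rule connected_path_image)
    have "L \<inter> R \<inter> path_image h \<noteq> {}"
    proof
      assume e: "L \<inter> R \<inter> path_image h = {}"
      have "path_image h \<subseteq> L \<union> R" using h(2) sub by blast
      from connected_closedD[OF conn e this cl]
      have "L \<inter> path_image h = {} \<or> R \<inter> path_image h = {}" .
      then show False using aL bR h(3,4) by blast
    qed
    then show ?thesis using LR by blast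
  qed
  have pu: "p \<in> path_image u \<and> p \<in> L \<inter> R"
    by (rule through) (use ud in \<open>auto intro: arc_imp_path\<close>)
  have pd: "p \<in> path_image d"
    using through[of d] ud by (auto intro: arc_imp_path)
  have "p \<in> {a, b}" using pu pd ud(7) by blast
  then show False using pu a(2) b(2) by blast
qed

lemma pullback:
  fixes g :: "real \<Rightarrow> real \<times> real" and c :: real and t :: "real \<times> real"
  assumes c: "c > 0" and g: "simple_path g" "pathfinish g = pathstart g"
    and sub: "path_image g \<subseteq> (\<lambda>x. c *\<^sub>R x + t) ` K"
  shows "simple_path (\<lambda>s. (1/c) *\<^sub>R (g s - t)) \<and>
         pathfinish (\<lambda>s. (1/c) *\<^sub>R (g s - t)) = pathstart (\<lambda>s. (1/c) *\<^sub>R (g s - t)) \<and>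
         path_image (\<lambda>s. (1/c) *\<^sub>R (g s - t)) \<subseteq> K \<and>
         dist ((1/c) *\<^sub>R (g 0 - t)) ((1/c) *\<^sub>R (g (1/2) - t)) = dist (g 0) (g (1/2)) / c"
proof (intro conjI)
  define h where "h = (\<lambda>s. (1/c) *\<^sub>R (g s - t))"
  have pg: "continuous_on {0..1} g" using g(1) unfolding simple_path_def path_def by blast
  have "path h" unfolding path_def h_def by (intro continuous_intros pg)
  moreover have "loop_free h"
    unfolding loop_free_def
  proof (intro ballI impI)
    fix x y assume xy: "x \<in> {0..1}" "y \<in> {0..1}" "h x = h y"
    then have "g x - t = g y - t" unfolding h_def using c by simp
    then have "g x = g y" by simp
    then show "x = y \<or> x = 0 \<and> y = 1 \<or> x = 1 \<and> y = 0"
      using g(1) xy(1,2) unfolding simple_path_def loop_free_def by blast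
  qed
  ultimately show "simple_path (\<lambda>s. (1/c) *\<^sub>R (g s - t))" unfolding simple_path_def h_def by simp
  show "pathfinish (\<lambda>s. (1/c) *\<^sub>R (g s - t)) = pathstart (\<lambda>s. (1/c) *\<^sub>R (g s - t))"
    using g(2) unfolding pathfinish_def pathstart_def by simp
  show "path_image (\<lambda>s. (1/c) *\<^sub>R (g s - t)) \<subseteq> K"
  proof
    fix y assume "y \<in> path_image (\<lambda>s. (1/c) *\<^sub>R (g s - t))"
    then obtain s where s: "s \<in> {0..1}" "y = (1/c) *\<^sub>R (g s - t)" unfolding path_image_def by auto
    have "g s \<in> path_image g" using s(1) unfolding path_image_def by auto
    then obtain k where k: "k \<in> K" "g s = c *\<^sub>R k + t" using sub by auto
    have "y = k" using s(2) k(2) c by simp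
    then show "y \<in> K" using k(1) by simp
  qed
  have "(1/c) *\<^sub>R (g 0 - t) - (1/c) *\<^sub>R (g (1/2) - t) = (1/c) *\<^sub>R (g 0 - g (1/2))"
    by (simp add: algebra_simps)
  then show "dist ((1/c) *\<^sub>R (g 0 - t)) ((1/c) *\<^sub>R (g (1/2) - t)) = dist (g 0) (g (1/2)) / c"
    using c by (simp add: dist_norm)
qed

lemma step_aff:
  fixes g :: "real \<Rightarrow> real \<times> real" and c :: real and t :: "real \<times> real"
  assumes c: "c > 0" "c \<le> 1/2" and g: "simple_path g" "pathstart g = pathfinish g"
    and sub: "path_image g \<subseteq> (\<lambda>x. c *\<^sub>R x + t) ` K"
  shows "\<exists>h. simple_path h \<and> pathstart h = pathfinish h \<and> path_image h \<subseteq> K \<and>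
             2 * dist (g 0) (g (1/2)) \<le> dist (h 0) (h (1/2))"
proof -
  note P = pullback[OF c(1) g(1) g(2)[symmetric] sub]
  define d where "d = dist (g 0) (g (1/2))"
  have d0: "0 \<le> d" unfolding d_def by simp
  have "2 * c * d \<le> 1 * d" using c d0 by (intro mult_right_mono) auto
  then have "2 * d \<le> d / c" using c by (simp add: le_divide_eq algebra_simps)
  then show ?thesis using P unfolding d_def
    by (intro exI[of _ "\<lambda>s. (1/c) *\<^sub>R (g s - t)"]) auto
qed

context attr begin

lemma closed_img: "closed (S1 ` K)" "closed (S2 ` K)" "closed (S3 ` K)" "closed (S4 ` K)" "closed (S5 ` K)"
  by (intro compact_imp_closed compact_continuous_image contS cK)+

lemma in_piece:
  fixes g :: "real \<Rightarrow> real \<times> real"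
  assumes g: "simple_path g" "pathfinish g = pathstart g" and sub: "path_image g \<subseteq> K"
  shows "path_image g \<subseteq> S1 ` K \<or> path_image g \<subseteq> S2 ` K \<or> path_image g \<subseteq> S3 ` K \<or>
         path_image g \<subseteq> S4 ` K \<or> path_image g \<subseteq> S5 ` K"
proof -
  define C where "C = path_image g"
  define K1 where "K1 = S1 ` K"
  define K2 where "K2 = S2 ` K"
  define K3 where "K3 = S3 ` K"
  define K4 where "K4 = S4 ` K"
  define K5 where "K5 = S5 ` K"
  have cl: "closed K1" "closed K2" "closed K3" "closed K4" "closed K5"
    unfolding K1_def K2_def K3_def K4_def K5_def by (rule closed_img)+
  note I = KI[folded K1_def K2_def K3_def K4_def K5_def]
  note J = KJ[folded K1_def K2_def K3_def K4_def K5_def]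
  have CK: "C \<subseteq> K1 \<union> K2 \<union> K3 \<union> K4 \<union> K5"
    using sub eqK unfolding C_def K1_def K2_def K3_def K4_def K5_def by simp
  have CU: "path_image g \<subseteq> K1 \<union> K2 \<union> K3 \<union> K4 \<union> K5" using CK unfolding C_def .
  have ca: "C \<subseteq> K1 \<or> C \<subseteq> K2 \<union> K3 \<union> K4 \<union> K5"
    unfolding C_def
  proof (rule circle_side[OF g])
    show "path_image g \<subseteq> K1 \<union> (K2 \<union> K3 \<union> K4 \<union> K5)" using CU by blast
    show "closed K1" by (rule cl)
    show "closed (K2 \<union> K3 \<union> K4 \<union> K5)" using cl by (intro closed_Un)
    show "K1 \<inter> (K2 \<union> K3 \<union> K4 \<union> K5) \<subseteq> {(1,0)}" using I(1,5,6,7) by blast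
  qed
  have cb: "C \<subseteq> K3 \<or> C \<subseteq> K1 \<union> K2 \<union> K4 \<union> K5"
    unfolding C_def
  proof (rule circle_side[OF g])
    show "path_image g \<subseteq> K3 \<union> (K1 \<union> K2 \<union> K4 \<union> K5)" using CU by blast
    show "closed K3" by (rule cl)
    show "closed (K1 \<union> K2 \<union> K4 \<union> K5)" using cl by (intro closed_Un)
    show "K3 \<inter> (K1 \<union> K2 \<union> K4 \<union> K5) \<subseteq> {(3,0)}" using I(2,5,9,10) by blast
  qed
  have cc: "C \<subseteq> K4 \<union> K5 \<or> C \<subseteq> K1 \<union> K2 \<union> K3"
    unfolding C_def
  proof (rule circle_side[OF g])
    show "path_image g \<subseteq> (K4 \<union> K5) \<union> (K1 \<union> K2 \<union> K3)" using CU by blast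
    show "closed (K4 \<union> K5)" using cl by (intro closed_Un)
    show "closed (K1 \<union> K2 \<union> K3)" using cl by (intro closed_Un)
    show "(K4 \<union> K5) \<inter> (K1 \<union> K2 \<union> K3) \<subseteq> {(2,2*hh)}" using I(3,6,7,8,9,10) by blast
  qed
  have cd: "C \<subseteq> K5 \<or> C \<subseteq> K1 \<union> K2 \<union> K3 \<union> K4"
    unfolding C_def
  proof (rule circle_side[OF g])
    show "path_image g \<subseteq> K5 \<union> (K1 \<union> K2 \<union> K3 \<union> K4)" using CU by blast
    show "closed K5" by (rule cl)
    show "closed (K1 \<union> K2 \<union> K3 \<union> K4)" using cl by (intro closed_Un)
    show "K5 \<inter> (K1 \<union> K2 \<union> K3 \<union> K4) \<subseteq> {(3/2,3*hh)}" using I(4,7,8,10) by blast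
  qed
  have "C \<subseteq> K1 \<or> C \<subseteq> K2 \<or> C \<subseteq> K3 \<or> C \<subseteq> K4 \<or> C \<subseteq> K5"
  proof (cases "C \<subseteq> K1")
    case True then show ?thesis by simp
  next
    case F1: False
    with ca have Ca: "C \<subseteq> K2 \<union> K3 \<union> K4 \<union> K5" by simp
    show ?thesis
    proof (cases "C \<subseteq> K3")
      case True then show ?thesis by simp
    next
      case F3: False
      with cb have Cb: "C \<subseteq> K1 \<union> K2 \<union> K4 \<union> K5" by simp
      show ?thesis
      proof (cases "C \<subseteq> K4 \<union> K5")
        case C45: True
        show ?thesis
        proof (cases "C \<subseteq> K5")
          case True then show ?thesis by simp
        next
          case False
          with cd have "C \<subseteq> K1 \<union> K2 \<union> K3 \<union> K4" by simp
          then have "C \<subseteq> K4" using C45 I(4) J(7) I(7) I(8) I(10) by blast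
          then show ?thesis by simp
        qed
      next
        case False
        with cc have "C \<subseteq> K1 \<union> K2 \<union> K3" by simp
        then have "C \<subseteq> K2" using Ca Cb I(1,2,5,6,7,9,10) J(2,3) by blast
        then show ?thesis by simp
      qed
    qed
  qed
  then show ?thesis unfolding C_def K1_def K2_def K3_def K4_def K5_def .
qed

lemma no_scc: "\<not> contains_simple_closed_curve K"
proof
  assume "contains_simple_closed_curve K"
  then obtain g where g: "simple_path g" "pathstart g = pathfinish g" "path_image g \<subseteq> K"
    unfolding contains_simple_closed_curve_def by blast
  define \<delta> where "\<delta> = dist (g 0) (g (1/2))"
  have "g 0 \<noteq> g (1/2)"
  proof
    assume "g 0 = g (1/2)"
    have lf: "\<forall>x\<in>{0..1}. \<forall>y\<in>{0..1}. g x = g y \<longrightarrow> x = y \<or> x = 0 \<and> y = 1 \<or> x = 1 \<and> y = 0"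
      using g(1) unfolding simple_path_def loop_free_def by blast
    have "(0::real) \<in> {0..1}" "(1/2::real) \<in> {0..1}" by auto
    from lf[rule_format, OF this \<open>g 0 = g (1/2)\<close>] show False by simp
  qed
  then have d0: "\<delta> > 0" unfolding \<delta>_def by simp
  have claim: "\<exists>h. simple_path h \<and> pathstart h = pathfinish h \<and> path_image h \<subseteq> K \<and>
                 2^n * \<delta> \<le> dist (h 0) (h (1/2))" for n
  proof (induction n)
    case 0 show ?case using g unfolding \<delta>_def by (intro exI[of _ g]) auto
  next
    case (Suc n)
    then obtain h where h: "simple_path h" "pathstart h = pathfinish h" "path_image h \<subseteq> K"
        "2^n * \<delta> \<le> dist (h 0) (h (1/2))" by blast
    have "\<exists>h'. simple_path h' \<and> pathstart h' = pathfinish h' \<and> path_image h' \<subseteq> K \<and>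
             2 * dist (h 0) (h (1/2)) \<le> dist (h' 0) (h' (1/2))"
      using in_piece[OF h(1) h(2)[symmetric] h(3)]
    proof (elim disjE)
      assume a: "path_image h \<subseteq> S1 ` K"
      show ?thesis using step_aff[OF _ _ h(1,2) a[unfolded S1_aff]] by simp
    next
      assume a: "path_image h \<subseteq> S2 ` K"
      show ?thesis using step_aff[OF _ _ h(1,2) a[unfolded S2_aff]] by simp
    next
      assume a: "path_image h \<subseteq> S3 ` K"
      show ?thesis using step_aff[OF _ _ h(1,2) a[unfolded S3_aff]] by simp
    next
      assume a: "path_image h \<subseteq> S4 ` K"
      show ?thesis using step_aff[OF _ _ h(1,2) a[unfolded S4_aff]] by simp
    next
      assume a: "path_image h \<subseteq> S5 ` K"
      show ?thesis using step_aff[OF _ _ h(1,2) a[unfolded S5_aff]] by simp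
    qed
    then obtain h' where h': "simple_path h'" "pathstart h' = pathfinish h'" "path_image h' \<subseteq> K"
        "2 * dist (h 0) (h (1/2)) \<le> dist (h' 0) (h' (1/2))" by blast
    have "2^(Suc n) * \<delta> \<le> dist (h' 0) (h' (1/2))" using h(4) h'(4) by simp
    then show ?case using h' by blast
  qed
  have "\<exists>n. diameter K / \<delta> < 2^n" by (rule real_arch_pow) simp
  then obtain n where n: "diameter K / \<delta> < 2^n" by blast
  then have n': "diameter K < 2^n * \<delta>" using d0 by (simp add: divide_less_eq)
  obtain h where h: "simple_path h" "pathstart h = pathfinish h" "path_image h \<subseteq> K"
                 "2^n * \<delta> \<le> dist (h 0) (h (1/2))" using claim by blast
  have "h 0 \<in> K" "h (1/2) \<in> K" using h(3) unfolding path_image_def by auto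
  then have "dist (h 0) (h (1/2)) \<le> diameter K" by (rule diameter_bounded_bound[OF bK])
  then show False using n' h(4) by linarith
qed

lemma dendrite_K: "dendrite K"
  unfolding dendrite_def using neK cK connected_K locally_connected_K no_scc by blast

end

theorem mainTheorem2:
  fixes K :: "(real \<times> real) set"
  assumes "compact K" and "K \<noteq> {}"
    and "K = S1 ` K \<union> S2 ` K \<union> S3 ` K \<union> S4 ` K \<union> S5 ` K"
  shows "dendrite K"
proof -
  interpret attr K using assms by unfold_locales
  show ?thesis by (rule dendrite_K)
qed

end
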